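(* For every $X\in\mathbb R^d$ and every $\psi\in\mathbb H$, $\mathbb M[(X+\zeta X)^*a\,D\psi]=0$.
   Context: $(\Omega,\mathcal G,\mu)$ is a probability space with an ergodic group $\{\tau_x\}_{x\in\mathbb R^d}$ of measure-preserving transformations, $(x,\omega)\mapsto g(\tau_x\omega)$ jointly measurable; $\mathbb M$ expectation, $(\cdot,\cdot)_2,|\cdot|_2$ the $L^2(\Omega)$ inner product and norm. $D_i$ is the $L^2(\Omega)$-generator of $g\mapsto g(\tau_{he_i}\cdot)$, $D\psi=(D_i\psi)_i$. $\sigma:\Omega\to\mathbb R^{d\times d}$ with $x\mapsto\sigma(\tau_x\omega)$ smooth, bounded with bounded derivatives uniformly in $\omega$; $a=\sigma\sigma^*$, $\Lambda I\le a\le\Lambda^{-1}I$; $b_j=\frac12D_ia_{ij}$ (summation convention). $\mathcal C=\mathrm{Span}\{g\star\phi:g\in L^\infty(\Omega),\phi\in C_c^\infty(\mathbb R^d)\}$, $g\star\phi(\omega)=\int g(\tau_x\omega)\phi(x)dx$; $\mathbb H$ the closure of $\mathcal C$ for $|\varphi|_2^2+|D\varphi|_2^2$. $U_\lambda f$ is the unique $w\in\mathbb H$ with $\lambda(w,\varphi)_2+\frac12(a_{ij}D_iw,D_j\varphi)_2=(f,\varphi)_2$ for all $\varphi\in\mathbb H$. $u^j_\lambda=U_\lambda(b_j)$; there exist $\zeta^j\in L^2(\Omega)^d$ with $\lambda|u^j_\lambda|_2^2+|Du^j_\lambda-\zeta^j|_2\to0$ as $\lambda\to0$; $\zeta$ is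 the matrix with entries $\zeta_{ij}=\zeta^j_i$. *)

theory Defs
  imports "HOL-Probability.Probability"
begin

definition ergodic_flow :: "'w measure \<Rightarrow> (real^'d \<Rightarrow> 'w \<Rightarrow> 'w) \<Rightarrow> bool" where
  "ergodic_flow M tau \<longleftrightarrow>
     prob_space M \<and>
     (\<lambda>(x, w). tau x w) \<in> measurable (lborel \<Otimes>\<^sub>M M) M \<and>
     (\<forall>x. \<forall>w\<in>space M. tau x w \<in> space M) \<and>
     (\<forall>w\<in>space M. tau 0 w = w) \<and>
     (\<forall>x y. \<forall>w\<in>space M. tau (x + y) w = tau x (tau y w)) \<and>
     (\<forall>x. tau x \<in> measurable M M \<and> distr M M (tau x) = M) \<and>
     (\<forall>A\<in>sets M. (\<forall>x. tau x -` A \<inter> space M = A) \<longrightarrow>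
         measure M A = 0 \<or> measure M A = 1)"

definition L2 :: "'w measure \<Rightarrow> ('w \<Rightarrow> real) \<Rightarrow> bool" where
  "L2 M f \<longleftrightarrow> f \<in> borel_measurable M \<and> integrable M (\<lambda>w. (f w)\<^sup>2)"

definition L2norm :: "'w measure \<Rightarrow> ('w \<Rightarrow> real) \<Rightarrow> real" where
  "L2norm M f = sqrt (\<integral>w. (f w)\<^sup>2 \<partial>M)"

definition L2normv :: "'w measure \<Rightarrow> ('d::finite \<Rightarrow> 'w \<Rightarrow> real) \<Rightarrow> real" where
  "L2normv M F = sqrt (\<integral>w. (\<Sum>i\<in>UNIV. (F i w)\<^sup>2) \<partial>M)"

definition Linf :: "'w measure \<Rightarrow> ('w \<Rightarrow> real) \<Rightarrow> bool" where
  "Linf M g \<longleftrightarrow> g \<in> borel_measurable M \<and> (\<exists>B. AE w in M. \<bar>g w\<bar> \<le> B)"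

text \<open>has_D M tau i psi phi: psi lies in the domain of the L^2-generator D_i of the
  group g \<mapsto> g(tau_{h e_i} \<cdot>), and D_i psi = phi (in L^2).\<close>
definition has_D :: "'w measure \<Rightarrow> (real^'d \<Rightarrow> 'w \<Rightarrow> 'w) \<Rightarrow> 'd \<Rightarrow> ('w \<Rightarrow> real) \<Rightarrow> ('w \<Rightarrow> real) \<Rightarrow> bool" where
  "has_D M tau i psi phi \<longleftrightarrow> L2 M psi \<and> L2 M phi \<and>
     ((\<lambda>h. L2norm M (\<lambda>w. (psi (tau (h *\<^sub>R axis i 1) w) - psi w) / h - phi w)) \<longlongrightarrow> 0) (at 0)"

text \<open>Smooth (C^infinity) function on R^d: all iterated partial derivatives exist everywhere.
  F js is the iterated partial derivative along the directions in the list js.\<close>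
definition smooth_fun :: "(real^'d \<Rightarrow> real) \<Rightarrow> bool" where
  "smooth_fun f \<longleftrightarrow> (\<exists>F :: 'd list \<Rightarrow> real^'d \<Rightarrow> real. F [] = f \<and>
     (\<forall>js x j. ((\<lambda>t. F js (x + t *\<^sub>R axis j 1)) has_real_derivative F (j # js) x) (at 0)))"

definition smooth_cpt :: "(real^'d \<Rightarrow> real) \<Rightarrow> bool" where
  "smooth_cpt f \<longleftrightarrow> smooth_fun f \<and> compact (closure {x. f x \<noteq> 0})"

definition bdd_smooth_family :: "'w set \<Rightarrow> ('w \<Rightarrow> real^'d \<Rightarrow> real) \<Rightarrow> bool" where
  "bdd_smooth_family S f \<longleftrightarrow> (\<exists>F :: 'd list \<Rightarrow> 'w \<Rightarrow> real^'d \<Rightarrow> real.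
     (\<forall>w\<in>S. F [] w = f w) \<and>
     (\<forall>js. \<forall>w\<in>S. \<forall>x j. ((\<lambda>t. F js w (x + t *\<^sub>R axis j 1)) has_real_derivative F (j # js) w x) (at 0)) \<and>
     (\<forall>js. \<exists>B. \<forall>w\<in>S. \<forall>x. \<bar>F js w x\<bar> \<le> B))"

definition conv :: "(real^'d \<Rightarrow> 'w \<Rightarrow> 'w) \<Rightarrow> ('w \<Rightarrow> real) \<Rightarrow> (real^'d \<Rightarrow> real) \<Rightarrow> 'w \<Rightarrow> real" where
  "conv tau g phi w = (\<integral>x. g (tau x w) * phi x \<partial>lborel)"

text \<open>The class \<C>: finite linear combinations of g \<star> phi (scalars absorbed in g).\<close>
definition Cset :: "'w measure \<Rightarrow> (real^'d \<Rightarrow> 'w \<Rightarrow> 'w) \<Rightarrow> ('w \<Rightarrow> real) set" where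
  "Cset M tau = {psi. \<exists>n (g :: nat \<Rightarrow> 'w \<Rightarrow> real) (phi :: nat \<Rightarrow> real^'d \<Rightarrow> real).
      (\<forall>k<n. Linf M (g k) \<and> smooth_cpt (phi k)) \<and>
      psi = (\<lambda>w. \<Sum>k<n. conv tau (g k) (phi k) w)}"

text \<open>\<H>: closure of \<C> in the norm |psi|_2^2 + |D psi|_2^2.\<close>
definition Hset :: "'w measure \<Rightarrow> (real^'d \<Rightarrow> 'w \<Rightarrow> 'w) \<Rightarrow> ('w \<Rightarrow> real) set" where
  "Hset M tau = {psi. L2 M psi \<and>
      (\<exists>(c :: nat \<Rightarrow> 'w \<Rightarrow> real) (Dc :: nat \<Rightarrow> 'd \<Rightarrow> 'w \<Rightarrow> real) (G :: 'd \<Rightarrow> 'w \<Rightarrow> real).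
         (\<forall>n. c n \<in> Cset M tau \<and> (\<forall>i. has_D M tau i (c n) (Dc n i))) \<and>
         (\<forall>i. L2 M (G i)) \<and>
         (\<lambda>n. L2norm M (\<lambda>w. c n w - psi w)) \<longlonglongrightarrow> 0 \<and>
         (\<lambda>n. L2normv M (\<lambda>i w. Dc n i w - G i w)) \<longlonglongrightarrow> 0)}"

end

theory Submission imports Defs begin

lemma L2_integrable_mult:
  assumes "L2 M f" "L2 M g"
  shows "integrable M (\<lambda>w. f w * g w)"
proof (rule Bochner_Integration.integrable_bound[where f="\<lambda>w. (f w)\<^sup>2 + (g w)\<^sup>2"])
  show "integrable M (\<lambda>w. (f w)\<^sup>2 + (g w)\<^sup>2)" using assms by (auto simp: L2_def)
  show "(\<lambda>w. f w * g w) \<in> borel_measurable M" using assms by (auto simp: L2_def)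
  show "AE x in M. norm (f x * g x) \<le> norm ((f x)\<^sup>2 + (g x)\<^sup>2)"
  proof (rule AE_I2)
    fix x
    have "0 \<le> (\<bar>f x\<bar> - \<bar>g x\<bar>)\<^sup>2" by simp
    then have "2 * (\<bar>f x\<bar> * \<bar>g x\<bar>) \<le> (f x)\<^sup>2 + (g x)\<^sup>2"
      by (simp add: power2_diff)
    moreover have "0 \<le> \<bar>f x\<bar> * \<bar>g x\<bar>" by simp
    moreover have "norm (f x * g x) = \<bar>f x\<bar> * \<bar>g x\<bar>" by (simp add: abs_mult)
    moreover have "norm ((f x)\<^sup>2 + (g x)\<^sup>2) = (f x)\<^sup>2 + (g x)\<^sup>2" by simp
    ultimately show "norm (f x * g x) \<le> norm ((f x)\<^sup>2 + (g x)\<^sup>2)"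
      by linarith
  qed
qed

lemma L2_add: "L2 M f \<Longrightarrow> L2 M g \<Longrightarrow> L2 M (\<lambda>w. f w + g w)"
  unfolding L2_def power2_sum
  using L2_integrable_mult[of M f g] by (auto simp: L2_def mult.assoc)

lemma L2_cmult: "L2 M f \<Longrightarrow> L2 M (\<lambda>w. c * f w)"
  unfolding L2_def by (auto simp: power_mult_distrib)

lemma L2_diff: "L2 M f \<Longrightarrow> L2 M g \<Longrightarrow> L2 M (\<lambda>w. f w - g w)"
  using L2_add[of M f "\<lambda>w. -1 * g w"] L2_cmult[of M g "-1"] by simp

lemma L2_bmult:
  assumes "L2 M f" "c \<in> borel_measurable M" "\<forall>w\<in>space M. \<bar>c w\<bar> \<le> B"
  shows "L2 M (\<lambda>w. c w * f w)"
  unfolding L2_def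
proof
  show "(\<lambda>w. c w * f w) \<in> borel_measurable M" using assms by (auto simp: L2_def)
  show "integrable M (\<lambda>w. (c w * f w)\<^sup>2)"
  proof (rule Bochner_Integration.integrable_bound[where f="\<lambda>w. B\<^sup>2 * (f w)\<^sup>2"])
    show "integrable M (\<lambda>w. B\<^sup>2 * (f w)\<^sup>2)" using assms by (auto simp: L2_def)
    show "(\<lambda>w. (c w * f w)\<^sup>2) \<in> borel_measurable M" using assms by (auto simp: L2_def)
    show "AE x in M. norm ((c x * f x)\<^sup>2) \<le> norm (B\<^sup>2 * (f x)\<^sup>2)"
    proof (rule AE_I2)
      fix x assume "x \<in> space M"
      then have "\<bar>c x\<bar> \<le> B" using assms by auto
      then have "\<bar>c x\<bar>\<^sup>2 \<le> B\<^sup>2" by (rule power_mono) simp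
      then have "(c x)\<^sup>2 \<le> B\<^sup>2" by simp
      then show "norm ((c x * f x)\<^sup>2) \<le> norm (B\<^sup>2 * (f x)\<^sup>2)"
        by (simp add: power_mult_distrib mult_right_mono)
    qed
  qed
qed

lemma L2_int_nonneg: "0 \<le> (\<integral>w. (f w :: real)\<^sup>2 \<partial>M)"
  by (simp add: integral_nonneg_AE)

lemma L2_CS:
  assumes "L2 M f" "L2 M g"
  shows "\<bar>\<integral>w. f w * g w \<partial>M\<bar> \<le> sqrt (\<integral>w. (f w)\<^sup>2 \<partial>M) * sqrt (\<integral>w. (g w)\<^sup>2 \<partial>M)"
proof -
  define A where "A = (\<integral>w. (f w)\<^sup>2 \<partial>M)"
  define B where "B = (\<integral>w. (g w)\<^sup>2 \<partial>M)"
  define C where "C = (\<integral>w. f w * g w \<partial>M)"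
  have iA: "integrable M (\<lambda>w. (f w)\<^sup>2)" and iB: "integrable M (\<lambda>w. (g w)\<^sup>2)"
    using assms by (auto simp: L2_def)
  have iC: "integrable M (\<lambda>w. f w * g w)" using L2_integrable_mult assms .
  have key: "0 \<le> A - 2 * t * C + t\<^sup>2 * B" for t
  proof -
    have "0 \<le> (\<integral>w. (f w - t * g w)\<^sup>2 \<partial>M)" by (rule L2_int_nonneg)
    also have "(\<integral>w. (f w - t * g w)\<^sup>2 \<partial>M) = (\<integral>w. (f w)\<^sup>2 - 2 * t * (f w * g w) + t\<^sup>2 * (g w)\<^sup>2 \<partial>M)"
      by (rule Bochner_Integration.integral_cong) (auto simp: power2_eq_square algebra_simps)
    also have "\<dots> = A - 2 * t * C + t\<^sup>2 * B"
      using iA iB iC by (simp add: A_def B_def C_def)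
    finally show ?thesis .
  qed
  have B0: "0 \<le> B" unfolding B_def by (rule L2_int_nonneg)
  have A0: "0 \<le> A" unfolding A_def by (rule L2_int_nonneg)
  have "C\<^sup>2 \<le> A * B"
  proof (cases "B = 0")
    case True
    have "C = 0"
    proof (rule ccontr)
      assume "C \<noteq> 0"
      have "0 \<le> A - 2 * ((A + 1) / (2 * C)) * C" using key[of "(A + 1) / (2 * C)"] True by simp
      with \<open>C \<noteq> 0\<close> show False by simp
    qed
    then show ?thesis using True by simp
  next
    case False
    then have Bp: "0 < B" using B0 by simp
    have "0 \<le> A - 2 * (C / B) * C + (C / B)\<^sup>2 * B" by (rule key)
    also have "\<dots> = A - C\<^sup>2 / B" using Bp by (simp add: power2_eq_square field_simps)
    finally have "C\<^sup>2 / B \<le> A" by simp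
    then show ?thesis using Bp by (simp add: field_simps)
  qed
  then have "sqrt (C\<^sup>2) \<le> sqrt (A * B)" by (rule real_sqrt_le_mono)
  then show ?thesis by (simp add: A_def B_def C_def real_sqrt_mult)
qed


lemma L2_div: "L2 M f \<Longrightarrow> L2 M (\<lambda>w. f w / c)"
  using L2_cmult[of M f "1/c"] by simp

lemma null_prod:
  assumes ev: "eventually (\<lambda>h. L2 M (P h) \<and> L2 M (Q h)) F"
    and P: "((\<lambda>h. \<integral>w. (P h w)\<^sup>2 \<partial>M) \<longlongrightarrow> 0) F"
    and Q: "((\<lambda>h. \<integral>w. (Q h w)\<^sup>2 \<partial>M) \<longlongrightarrow> q) F"
  shows "((\<lambda>h. \<integral>w. P h w * Q h w \<partial>M) \<longlongrightarrow> 0) F"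
proof (rule tendsto_0_le[where K=1])
  have "((\<lambda>h. sqrt (\<integral>w. (P h w)\<^sup>2 \<partial>M) * sqrt (\<integral>w. (Q h w)\<^sup>2 \<partial>M)) \<longlongrightarrow> sqrt 0 * sqrt q) F"
    by (intro tendsto_mult tendsto_real_sqrt P Q)
  then show "((\<lambda>h. sqrt (\<integral>w. (P h w)\<^sup>2 \<partial>M) * sqrt (\<integral>w. (Q h w)\<^sup>2 \<partial>M)) \<longlongrightarrow> 0) F" by simp
  show "\<forall>\<^sub>F x in F. norm (\<integral>w. P x w * Q x w \<partial>M) \<le> norm (sqrt (\<integral>w. (P x w)\<^sup>2 \<partial>M) * sqrt (\<integral>w. (Q x w)\<^sup>2 \<partial>M)) * 1"
    using ev
  proof eventually_elim
    case (elim h)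
    then have "\<bar>\<integral>w. P h w * Q h w \<partial>M\<bar> \<le> sqrt (\<integral>w. (P h w)\<^sup>2 \<partial>M) * sqrt (\<integral>w. (Q h w)\<^sup>2 \<partial>M)"
      by (intro L2_CS) auto
    moreover have "0 \<le> sqrt (\<integral>w. (P h w)\<^sup>2 \<partial>M) * sqrt (\<integral>w. (Q h w)\<^sup>2 \<partial>M)"
      by (simp add: L2_int_nonneg)
    ultimately show ?case by simp
  qed
qed

lemma prod_conv:
  assumes ev: "eventually (\<lambda>h. L2 M (Fh h) \<and> L2 M (Gh h)) F"
    and F0: "L2 M F0" and G0: "L2 M G0"
    and FF: "((\<lambda>h. \<integral>w. (Fh h w - F0 w)\<^sup>2 \<partial>M) \<longlongrightarrow> 0) F"
    and GG: "((\<lambda>h. \<integral>w. (Gh h w - G0 w)\<^sup>2 \<partial>M) \<longlongrightarrow> 0) F"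
  shows "((\<lambda>h. \<integral>w. Fh h w * Gh h w \<partial>M) \<longlongrightarrow> (\<integral>w. F0 w * G0 w \<partial>M)) F"
proof -
  let ?P = "\<lambda>h w. Fh h w - F0 w" and ?Q = "\<lambda>h w. Gh h w - G0 w"
  have evPQ: "eventually (\<lambda>h. L2 M (?P h) \<and> L2 M (?Q h)) F"
    using ev by eventually_elim (auto intro: L2_diff F0 G0)
  have l1: "((\<lambda>h. \<integral>w. ?P h w * ?Q h w \<partial>M) \<longlongrightarrow> 0) F"
    by (rule null_prod[OF evPQ FF GG])
  have l2: "((\<lambda>h. \<integral>w. ?P h w * G0 w \<partial>M) \<longlongrightarrow> 0) F"
    by (rule null_prod[OF _ FF tendsto_const]) (use evPQ G0 in \<open>auto elim: eventually_mono\<close>)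
  have l3: "((\<lambda>h. \<integral>w. ?Q h w * F0 w \<partial>M) \<longlongrightarrow> 0) F"
    by (rule null_prod[OF _ GG tendsto_const]) (use evPQ F0 in \<open>auto elim: eventually_mono\<close>)
  have "((\<lambda>h. (\<integral>w. F0 w * G0 w \<partial>M) + ((\<integral>w. ?P h w * ?Q h w \<partial>M) + (\<integral>w. ?P h w * G0 w \<partial>M) + (\<integral>w. ?Q h w * F0 w \<partial>M)))
      \<longlongrightarrow> (\<integral>w. F0 w * G0 w \<partial>M) + (0 + 0 + 0)) F"
    by (intro tendsto_add l1 l2 l3 tendsto_const)
  then have lim: "((\<lambda>h. (\<integral>w. F0 w * G0 w \<partial>M) + ((\<integral>w. ?P h w * ?Q h w \<partial>M) + (\<integral>w. ?P h w * G0 w \<partial>M) + (\<integral>w. ?Q h w * F0 w \<partial>M)))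
      \<longlongrightarrow> (\<integral>w. F0 w * G0 w \<partial>M)) F" by simp
  show ?thesis
  proof (rule Lim_transform_eventually[OF lim])
    show "\<forall>\<^sub>F h in F. (\<integral>w. F0 w * G0 w \<partial>M) + ((\<integral>w. ?P h w * ?Q h w \<partial>M) + (\<integral>w. ?P h w * G0 w \<partial>M) + (\<integral>w. ?Q h w * F0 w \<partial>M)) = (\<integral>w. Fh h w * Gh h w \<partial>M)"
      using evPQ ev
    proof eventually_elim
      case (elim h)
      have i1: "integrable M (\<lambda>w. F0 w * G0 w)" using F0 G0 by (rule L2_integrable_mult)
      have i2: "integrable M (\<lambda>w. ?P h w * ?Q h w)" using elim by (intro L2_integrable_mult) auto
      have i3: "integrable M (\<lambda>w. ?P h w * G0 w)" using elim G0 by (intro L2_integrable_mult) auto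
      have i4: "integrable M (\<lambda>w. ?Q h w * F0 w)" using elim F0 by (intro L2_integrable_mult) auto
      have "(\<integral>w. F0 w * G0 w \<partial>M) + ((\<integral>w. ?P h w * ?Q h w \<partial>M) + (\<integral>w. ?P h w * G0 w \<partial>M) + (\<integral>w. ?Q h w * F0 w \<partial>M))
          = (\<integral>w. F0 w * G0 w + (?P h w * ?Q h w + ?P h w * G0 w + ?Q h w * F0 w) \<partial>M)"
        using i1 i2 i3 i4 by simp
      also have "\<dots> = (\<integral>w. Fh h w * Gh h w \<partial>M)"
        by (rule Bochner_Integration.integral_cong) (auto simp: algebra_simps)
      finally show ?case .
    qed
  qed
qed

lemma L2norm_sq_tendsto:
  assumes "((\<lambda>h. L2norm M (P h)) \<longlongrightarrow> 0) F"
  shows "((\<lambda>h. \<integral>w. (P h w)\<^sup>2 \<partial>M) \<longlongrightarrow> 0) F"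
proof -
  have "((\<lambda>h. (L2norm M (P h))\<^sup>2) \<longlongrightarrow> 0\<^sup>2) F" by (intro tendsto_power assms)
  moreover have "(L2norm M (P h))\<^sup>2 = (\<integral>w. (P h w)\<^sup>2 \<partial>M)" for h
    unfolding L2norm_def by (simp add: L2_int_nonneg)
  ultimately show ?thesis by simp
qed


lemma flow_facts:
  assumes "ergodic_flow M tau"
  shows "prob_space M" "tau x \<in> measurable M M" "distr M M (tau x) = M"
  using assms unfolding ergodic_flow_def by auto

lemma L2_comp:
  assumes flow: "ergodic_flow M tau" and f: "L2 M f"
  shows "L2 M (\<lambda>w. f (tau x w))"
proof -
  note m = flow_facts(2)[OF flow, of x]
  have fm: "f \<in> borel_measurable M" using f by (simp add: L2_def)
  have "integrable (distr M M (tau x)) (\<lambda>w. (f w)\<^sup>2) \<longleftrightarrow> integrable M (\<lambda>w. (f (tau x w))\<^sup>2)"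
    by (rule integrable_distr_eq[OF m]) (use fm in simp)
  then show ?thesis using f fm m flow_facts(3)[OF flow, of x]
    by (auto simp: L2_def intro: measurable_compose)
qed

lemma integral_comp:
  assumes flow: "ergodic_flow M tau" and f: "f \<in> borel_measurable M"
  shows "(\<integral>w. f (tau x w) \<partial>M) = (\<integral>w. (f w :: real) \<partial>M)"
  using integral_distr[OF flow_facts(2)[OF flow, of x] f] flow_facts(3)[OF flow, of x] by simp

lemma ibp:
  assumes flow: "ergodic_flow M tau"
    and hf: "has_D M tau i f Df" and hg: "has_D M tau i g Dg"
  shows "(\<integral>w. Df w * g w \<partial>M) + (\<integral>w. f w * Dg w \<partial>M) = 0"
proof -
  define T where "T h = tau (h *\<^sub>R axis i 1)" for h
  have f: "L2 M f" and Df: "L2 M Df" and g: "L2 M g" and Dg: "L2 M Dg"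
    using hf hg by (auto simp: has_D_def)
  define df where "df h w = (f (T h w) - f w) / h" for h w
  define dg where "dg h w = (g (T h w) - g w) / h" for h w
  have fT: "L2 M (\<lambda>w. f (T h w))" for h unfolding T_def by (rule L2_comp[OF flow f])
  have gT: "L2 M (\<lambda>w. g (T h w))" for h unfolding T_def by (rule L2_comp[OF flow g])
  have dfL: "L2 M (df h)" for h unfolding df_def by (intro L2_div L2_diff fT f)
  have dgL: "L2 M (dg h)" for h unfolding dg_def by (intro L2_div L2_diff gT g)
  have limf: "((\<lambda>h. \<integral>w. (df h w - Df w)\<^sup>2 \<partial>M) \<longlongrightarrow> 0) (at 0)"
    using hf unfolding has_D_def df_def T_def by (intro L2norm_sq_tendsto) auto
  have limg: "((\<lambda>h. \<integral>w. (dg h w - Dg w)\<^sup>2 \<partial>M) \<longlongrightarrow> 0) (at 0)"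
    using hg unfolding has_D_def dg_def T_def by (intro L2norm_sq_tendsto) auto
  have ev0: "eventually (\<lambda>h. h \<noteq> (0::real)) (at 0)"
    by (simp add: eventually_at_filter)
  have limgT: "((\<lambda>h. \<integral>w. (g (T h w) - g w)\<^sup>2 \<partial>M) \<longlongrightarrow> 0) (at 0)"
  proof (rule tendsto_0_le[where K=1])
    let ?B = "\<lambda>h. h\<^sup>2 * (2 * (\<integral>w. (dg h w - Dg w)\<^sup>2 \<partial>M) + 2 * (\<integral>w. (Dg w)\<^sup>2 \<partial>M))"
    have "(?B \<longlongrightarrow> 0\<^sup>2 * (2 * 0 + 2 * (\<integral>w. (Dg w)\<^sup>2 \<partial>M))) (at 0)"
      by (intro tendsto_mult tendsto_add tendsto_const limg tendsto_power tendsto_ident_at)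
    then show "(?B \<longlongrightarrow> 0) (at 0)" by simp
    show "\<forall>\<^sub>F h in at 0. norm (\<integral>w. (g (T h w) - g w)\<^sup>2 \<partial>M) \<le> norm (?B h) * 1"
      using ev0
    proof eventually_elim
      case (elim h)
      have "(\<integral>w. (g (T h w) - g w)\<^sup>2 \<partial>M) = (\<integral>w. h\<^sup>2 * (dg h w)\<^sup>2 \<partial>M)"
        by (rule Bochner_Integration.integral_cong) (use elim in \<open>auto simp: dg_def power_divide\<close>)
      also have "\<dots> = h\<^sup>2 * (\<integral>w. (dg h w)\<^sup>2 \<partial>M)" by simp
      also have "(\<integral>w. (dg h w)\<^sup>2 \<partial>M) \<le> (\<integral>w. 2 * (dg h w - Dg w)\<^sup>2 + 2 * (Dg w)\<^sup>2 \<partial>M)"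
      proof (rule integral_mono)
        show "integrable M (\<lambda>w. (dg h w)\<^sup>2)" using dgL by (simp add: L2_def)
        show "integrable M (\<lambda>w. 2 * (dg h w - Dg w)\<^sup>2 + 2 * (Dg w)\<^sup>2)"
          using L2_diff[OF dgL Dg, of h] Dg by (auto simp: L2_def)
        fix w
        have "0 \<le> (dg h w - 2 * Dg w)\<^sup>2" by simp
        then show "(dg h w)\<^sup>2 \<le> 2 * (dg h w - Dg w)\<^sup>2 + 2 * (Dg w)\<^sup>2"
          by (simp add: power2_eq_square algebra_simps)
      qed
      also have "(\<integral>w. 2 * (dg h w - Dg w)\<^sup>2 + 2 * (Dg w)\<^sup>2 \<partial>M) = 2 * (\<integral>w. (dg h w - Dg w)\<^sup>2 \<partial>M) + 2 * (\<integral>w. (Dg w)\<^sup>2 \<partial>M)"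
        using L2_diff[OF dgL Dg, of h] Dg by (auto simp: L2_def)
      finally have "(\<integral>w. (g (T h w) - g w)\<^sup>2 \<partial>M) \<le> ?B h"
        by (simp add: mult_left_mono)
      moreover have "0 \<le> (\<integral>w. (g (T h w) - g w)\<^sup>2 \<partial>M)" by (rule L2_int_nonneg)
      ultimately show ?case by simp
    qed
  qed
  have lim1: "((\<lambda>h. \<integral>w. df h w * g (T h w) \<partial>M) \<longlongrightarrow> (\<integral>w. Df w * g w \<partial>M)) (at 0)"
    by (rule prod_conv[OF _ Df g limf limgT]) (simp add: dfL gT)
  have lim2: "((\<lambda>h. \<integral>w. f w * dg h w \<partial>M) \<longlongrightarrow> (\<integral>w. f w * Dg w \<partial>M)) (at 0)"
    by (rule prod_conv[OF _ f Dg _ limg]) (simp_all add: dgL f)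
  have lim: "((\<lambda>h. (\<integral>w. df h w * g (T h w) \<partial>M) + (\<integral>w. f w * dg h w \<partial>M))
     \<longlongrightarrow> (\<integral>w. Df w * g w \<partial>M) + (\<integral>w. f w * Dg w \<partial>M)) (at 0)"
    by (intro tendsto_add lim1 lim2)
  have zero: "((\<lambda>h. (\<integral>w. df h w * g (T h w) \<partial>M) + (\<integral>w. f w * dg h w \<partial>M)) \<longlongrightarrow> 0) (at 0)"
  proof (rule Lim_transform_eventually[OF tendsto_const])
    show "\<forall>\<^sub>F h in at 0. 0 = (\<integral>w. df h w * g (T h w) \<partial>M) + (\<integral>w. f w * dg h w \<partial>M)"
      using ev0
    proof eventually_elim
      case (elim h)
      have i1: "integrable M (\<lambda>w. df h w * g (T h w))" by (intro L2_integrable_mult dfL gT)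
      have i2: "integrable M (\<lambda>w. f w * dg h w)" by (intro L2_integrable_mult dgL f)
      have i3: "integrable M (\<lambda>w. f (T h w) * g (T h w))" by (intro L2_integrable_mult fT gT)
      have i4: "integrable M (\<lambda>w. f w * g w)" by (intro L2_integrable_mult f g)
      have m: "(\<lambda>w. f w * g w) \<in> borel_measurable M" using i4 by auto
      have "(\<integral>w. df h w * g (T h w) \<partial>M) + (\<integral>w. f w * dg h w \<partial>M)
         = (\<integral>w. df h w * g (T h w) + f w * dg h w \<partial>M)" using i1 i2 by simp
      also have "\<dots> = (\<integral>w. (f (T h w) * g (T h w) - f w * g w) / h \<partial>M)"
        by (rule Bochner_Integration.integral_cong) (use elim in \<open>auto simp: df_def dg_def field_simps\<close>)
      also have "\<dots> = ((\<integral>w. f (T h w) * g (T h w) \<partial>M) - (\<integral>w. f w * g w \<partial>M)) / h"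
        using i3 i4 by simp
      also have "(\<integral>w. f (T h w) * g (T h w) \<partial>M) = (\<integral>w. f w * g w \<partial>M)"
        unfolding T_def by (rule integral_comp[OF flow m])
      finally show ?case by simp
    qed
  qed
  show ?thesis using tendsto_unique[OF _ lim zero] by simp
qed


lemma sigma_bound:
  fixes sigma :: "'a \<Rightarrow> real^'d^'d" and M :: "'a measure" and tau :: "real^'d \<Rightarrow> 'a \<Rightarrow> 'a"
  assumes flow: "ergodic_flow M tau"
    and sm: "\<forall>k l. bdd_smooth_family (space M) (\<lambda>w x. sigma (tau x w) $ k $ l)"
  shows "\<exists>B. \<forall>w\<in>space M. \<bar>sigma w $ k $ l\<bar> \<le> B"
proof -
  obtain F :: "'d list \<Rightarrow> 'a \<Rightarrow> real^'d \<Rightarrow> real" where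
    F0: "\<forall>w\<in>space M. F [] w = (\<lambda>x. sigma (tau x w) $ k $ l)"
    and FB: "\<forall>js. \<exists>B. \<forall>w\<in>space M. \<forall>x. \<bar>F js w x\<bar> \<le> B"
    using sm[rule_format, of k l] unfolding bdd_smooth_family_def by blast
  obtain B where B: "\<forall>w\<in>space M. \<forall>x. \<bar>F [] w x\<bar> \<le> B" using FB by blast
  have t0: "\<forall>w\<in>space M. tau 0 w = w" using flow by (simp add: ergodic_flow_def)
  show ?thesis
  proof (intro exI ballI)
    fix w assume w: "w \<in> space M"
    have "\<bar>F [] w 0\<bar> \<le> B" using B w by blast
    then show "\<bar>sigma w $ k $ l\<bar> \<le> B" using F0 w t0 by (metis)
  qed
qed

lemma a_bound:
  fixes sigma :: "'a \<Rightarrow> real^'d^'d" and M :: "'a measure" and tau :: "real^'d \<Rightarrow> 'a \<Rightarrow> 'a"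
  assumes flow: "ergodic_flow M tau"
    and sm: "\<forall>k l. bdd_smooth_family (space M) (\<lambda>w x. sigma (tau x w) $ k $ l)"
  shows "\<exists>C. \<forall>w\<in>space M. \<bar>(sigma w ** transpose (sigma w)) $ i $ k\<bar> \<le> C"
proof -
  have "\<forall>p. \<exists>B. \<forall>w\<in>space M. \<bar>sigma w $ fst p $ snd p\<bar> \<le> B"
    using sigma_bound[OF flow sm] by blast
  then obtain B where B: "\<And>p w. w \<in> space M \<Longrightarrow> \<bar>sigma w $ fst p $ snd p\<bar> \<le> B p"
    by metis
  show ?thesis
  proof (intro exI ballI)
    fix w assume w: "w \<in> space M"
    have "\<bar>(sigma w ** transpose (sigma w)) $ i $ k\<bar> = \<bar>\<Sum>j\<in>UNIV. sigma w $ i $ j * sigma w $ k $ j\<bar>"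
      by (simp add: matrix_matrix_mult_def transpose_def)
    also have "\<dots> \<le> (\<Sum>j\<in>UNIV. \<bar>sigma w $ i $ j\<bar> * \<bar>sigma w $ k $ j\<bar>)"
      by (rule order_trans[OF sum_abs]) (simp add: abs_mult)
    also have "\<dots> \<le> (\<Sum>j\<in>UNIV. B (i, j) * B (k, j))"
    proof (rule sum_mono)
      fix j
      have 1: "\<bar>sigma w $ i $ j\<bar> \<le> B (i, j)" using B[OF w, of "(i,j)"] by simp
      have 2: "\<bar>sigma w $ k $ j\<bar> \<le> B (k, j)" using B[OF w, of "(k,j)"] by simp
      show "\<bar>sigma w $ i $ j\<bar> * \<bar>sigma w $ k $ j\<bar> \<le> B (i, j) * B (k, j)"
        by (rule mult_mono[OF 1 2]) (use 1 in auto)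
    qed
    finally show "\<bar>(sigma w ** transpose (sigma w)) $ i $ k\<bar> \<le> (\<Sum>j\<in>UNIV. B (i, j) * B (k, j))" .
  qed
qed

lemma swap3: "(\<Sum>i\<in>A. \<Sum>k\<in>B. \<Sum>j\<in>C. f i k j) = (\<Sum>j\<in>C. \<Sum>i\<in>A. \<Sum>k\<in>B. f i k j)"
proof -
  have "(\<Sum>i\<in>A. \<Sum>k\<in>B. \<Sum>j\<in>C. f i k j) = (\<Sum>i\<in>A. \<Sum>j\<in>C. \<Sum>k\<in>B. f i k j)"
    by (rule sum.cong[OF refl], rule sum.swap)
  also have "\<dots> = (\<Sum>j\<in>C. \<Sum>i\<in>A. \<Sum>k\<in>B. f i k j)" by (rule sum.swap)
  finally show ?thesis .
qed

lemma a_sym: "(S ** transpose S) $ i $ k = (S ** transpose S) $ k $ i" for S :: "real^'d^'d"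
  by (simp add: matrix_matrix_mult_def transpose_def mult.commute)

theorem mainTheorem13:
  fixes M :: "'w measure" and tau :: "real^'d \<Rightarrow> 'w \<Rightarrow> 'w"
    and sigma :: "'w \<Rightarrow> real^'d^'d" and Lam :: real
    and dA :: "'d \<Rightarrow> 'd \<Rightarrow> 'w \<Rightarrow> real" and b :: "'d \<Rightarrow> 'w \<Rightarrow> real"
    and u :: "real \<Rightarrow> 'd \<Rightarrow> 'w \<Rightarrow> real" and Du :: "real \<Rightarrow> 'd \<Rightarrow> 'd \<Rightarrow> 'w \<Rightarrow> real"
    and zeta :: "'d \<Rightarrow> 'd \<Rightarrow> 'w \<Rightarrow> real"
    and X :: "real^'d" and psi :: "'w \<Rightarrow> real" and Dpsi :: "'d \<Rightarrow> 'w \<Rightarrow> real"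
  assumes flow: "ergodic_flow M tau"
    and sigma_meas: "\<forall>k l. (\<lambda>w. sigma w $ k $ l) \<in> borel_measurable M"
    and sigma_smooth: "\<forall>k l. bdd_smooth_family (space M) (\<lambda>w x. sigma (tau x w) $ k $ l)"
    and Lam_pos: "0 < Lam"
    and elliptic: "\<forall>w\<in>space M. \<forall>\<xi>::real^'d.
          Lam * (\<xi> \<bullet> \<xi>) \<le> \<xi> \<bullet> ((sigma w ** transpose (sigma w)) *v \<xi>) \<and>
          \<xi> \<bullet> ((sigma w ** transpose (sigma w)) *v \<xi>) \<le> (\<xi> \<bullet> \<xi>) / Lam"
    and dA: "\<forall>i j. has_D M tau i (\<lambda>w. (sigma w ** transpose (sigma w)) $ i $ j) (dA i j)"
    and b_def: "\<forall>j w. b j w = 1/2 * (\<Sum>i\<in>UNIV. dA i j w)"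
    and u_res: "\<forall>l>0. \<forall>j. u l j \<in> Hset M tau \<and> (\<forall>i. has_D M tau i (u l j) (Du l j i)) \<and>
          (\<forall>phi Dphi. phi \<in> Hset M tau \<and> (\<forall>i. has_D M tau i phi (Dphi i)) \<longrightarrow>
             l * (\<integral>w. u l j w * phi w \<partial>M)
             + 1/2 * (\<integral>w. (\<Sum>i\<in>UNIV. \<Sum>k\<in>UNIV.
                   (sigma w ** transpose (sigma w)) $ i $ k * Du l j i w * Dphi k w) \<partial>M)
             = (\<integral>w. b j w * phi w \<partial>M))"
    and zeta_L2: "\<forall>j i. L2 M (zeta j i)"
    and zeta_lim: "\<forall>j. ((\<lambda>l. l * (L2norm M (u l j))\<^sup>2 + L2normv M (\<lambda>i w. Du l j i w - zeta j i w))
                      \<longlongrightarrow> 0) (at_right 0)"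
    and psi_H: "psi \<in> Hset M tau"
    and Dpsi: "\<forall>i. has_D M tau i psi (Dpsi i)"
  shows "(\<integral>w. (\<Sum>i\<in>UNIV. \<Sum>k\<in>UNIV.
            (X $ i + (\<Sum>j\<in>UNIV. zeta j i w * X $ j))
            * (sigma w ** transpose (sigma w)) $ i $ k * Dpsi k w) \<partial>M) = 0"
proof -
  define a where "a w i k = (sigma w ** transpose (sigma w)) $ i $ k" for w i k
  have pf: "prob_space M" using flow_facts(1)[OF flow] .
  have psiL: "L2 M psi" and DpsiL: "\<And>k. L2 M (Dpsi k)" using Dpsi by (auto simp: has_D_def)
  have aL: "\<And>i k. L2 M (\<lambda>w. a w i k)" using dA by (auto simp: has_D_def a_def)
  have am: "\<And>i k. (\<lambda>w. a w i k) \<in> borel_measurable M" using aL by (simp add: L2_def)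
  have dAL: "\<And>i k. L2 M (dA i k)" using dA by (auto simp: has_D_def)
  have zL: "\<And>j i. L2 M (zeta j i)" using zeta_L2 by auto
  have one: "L2 M (\<lambda>w. 1)" unfolding L2_def using pf
    by (simp add: prob_space.finite_measure finite_measure.integrable_const)
  define G where "G i k w = a w i k * Dpsi k w" for i k w
  have GL: "L2 M (G i k)" for i k
  proof -
    obtain C where C: "\<forall>w\<in>space M. \<bar>a w i k\<bar> \<le> C"
      using a_bound[OF flow sigma_smooth, of i k] unfolding a_def by blast
    show ?thesis unfolding G_def by (rule L2_bmult[OF DpsiL am C])
  qed
  have claim1: "(\<Sum>k\<in>UNIV. \<integral>w. G i k w \<partial>M) = - 2 * (\<integral>w. b i w * psi w \<partial>M)" for i
  proof -
    have "(\<integral>w. G i k w \<partial>M) = - (\<integral>w. dA k i w * psi w \<partial>M)" for k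
    proof -
      have hk: "has_D M tau k (\<lambda>w. a w k i) (dA k i)" using dA by (simp add: a_def)
      have "(\<integral>w. dA k i w * psi w \<partial>M) + (\<integral>w. a w k i * Dpsi k w \<partial>M) = 0"
        by (rule ibp[OF flow hk]) (use Dpsi in simp)
      moreover have "(\<integral>w. G i k w \<partial>M) = (\<integral>w. a w k i * Dpsi k w \<partial>M)"
        unfolding G_def a_def by (subst a_sym) simp
      ultimately show ?thesis by linarith
    qed
    then have "(\<Sum>k\<in>UNIV. \<integral>w. G i k w \<partial>M) = - (\<Sum>k\<in>UNIV. \<integral>w. dA k i w * psi w \<partial>M)"
      by (simp add: sum_negf)
    also have "(\<Sum>k\<in>UNIV. \<integral>w. dA k i w * psi w \<partial>M) = (\<integral>w. (\<Sum>k\<in>UNIV. dA k i w * psi w) \<partial>M)"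
      by (rule Bochner_Integration.integral_sum[symmetric, where f="\<lambda>k w. dA k i w * psi w"]) (intro L2_integrable_mult dAL psiL)
    also have "\<dots> = (\<integral>w. 2 * (b i w * psi w) \<partial>M)"
      by (rule Bochner_Integration.integral_cong) (auto simp: b_def sum_distrib_right)
    also have "\<dots> = 2 * (\<integral>w. b i w * psi w \<partial>M)" by simp
    finally show ?thesis by simp
  qed
  have claim2: "(\<Sum>i\<in>UNIV. \<Sum>k\<in>UNIV. \<integral>w. zeta j i w * G i k w \<partial>M) = 2 * (\<integral>w. b j w * psi w \<partial>M)" for j
  proof -
    let ?F = "at_right (0::real)"
    have evp: "eventually (\<lambda>l. 0 < l) ?F" by (rule eventually_at_right_less)
    have uL: "L2 M (u l j)" if "0 < l" for l
      using u_res that by (auto simp: has_D_def)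
    have DuL: "L2 M (Du l j i)" if "0 < l" for l i
      using u_res that by (auto simp: has_D_def)
    define t1 where "t1 l = l * (L2norm M (u l j))\<^sup>2" for l
    define t2 where "t2 l = L2normv M (\<lambda>i w. Du l j i w - zeta j i w)" for l
    have zl: "((\<lambda>l. t1 l + t2 l) \<longlongrightarrow> 0) ?F" using zeta_lim unfolding t1_def t2_def by auto
    have t2nn: "0 \<le> t2 l" for l
    proof -
      have "0 \<le> (\<integral>w. (\<Sum>i\<in>UNIV. (Du l j i w - zeta j i w)\<^sup>2) \<partial>M)"
        by (rule Bochner_Integration.integral_nonneg) (simp add: sum_nonneg)
      then show ?thesis unfolding t2_def L2normv_def by simp
    qed
    have t1nn: "0 < l \<Longrightarrow> 0 \<le> t1 l" for l unfolding t1_def by simp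
    have t1lim: "(t1 \<longlongrightarrow> 0) ?F"
    proof (rule tendsto_0_le[OF zl, where K=1])
      show "\<forall>\<^sub>F l in ?F. norm (t1 l) \<le> norm (t1 l + t2 l) * 1"
        using evp by eventually_elim (use t1nn t2nn in \<open>auto\<close>)
    qed
    have t2lim: "(t2 \<longlongrightarrow> 0) ?F"
    proof (rule tendsto_0_le[OF zl, where K=1])
      show "\<forall>\<^sub>F l in ?F. norm (t2 l) \<le> norm (t1 l + t2 l) * 1"
        using evp by eventually_elim (use t1nn t2nn in \<open>auto\<close>)
    qed
    have sumlim: "((\<lambda>l. \<integral>w. (\<Sum>i\<in>UNIV. (Du l j i w - zeta j i w)\<^sup>2) \<partial>M) \<longlongrightarrow> 0) ?F"
    proof -
      have "((\<lambda>l. (t2 l)\<^sup>2) \<longlongrightarrow> 0\<^sup>2) ?F" by (intro tendsto_power t2lim)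
      moreover have "(t2 l)\<^sup>2 = (\<integral>w. (\<Sum>i\<in>UNIV. (Du l j i w - zeta j i w)\<^sup>2) \<partial>M)" for l
      proof -
        have "0 \<le> (\<integral>w. (\<Sum>i\<in>UNIV. (Du l j i w - zeta j i w)\<^sup>2) \<partial>M)"
          by (rule Bochner_Integration.integral_nonneg) (simp add: sum_nonneg)
        then show ?thesis unfolding t2_def L2normv_def by simp
      qed
      ultimately show ?thesis by simp
    qed
    have ilim: "((\<lambda>l. \<integral>w. (Du l j i w - zeta j i w)\<^sup>2 \<partial>M) \<longlongrightarrow> 0) ?F" for i
    proof (rule tendsto_0_le[OF sumlim, where K=1])
      show "\<forall>\<^sub>F l in ?F. norm (\<integral>w. (Du l j i w - zeta j i w)\<^sup>2 \<partial>M) \<le> norm (\<integral>w. (\<Sum>i\<in>UNIV. (Du l j i w - zeta j i w)\<^sup>2) \<partial>M) * 1"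
        using evp
      proof eventually_elim
        case (elim l)
        have dL: "L2 M (\<lambda>w. Du l j i' w - zeta j i' w)" for i'
          by (intro L2_diff DuL zL elim)
        have le: "(\<integral>w. (Du l j i w - zeta j i w)\<^sup>2 \<partial>M) \<le> (\<integral>w. (\<Sum>i\<in>UNIV. (Du l j i w - zeta j i w)\<^sup>2) \<partial>M)"
        proof (rule integral_mono)
          show "integrable M (\<lambda>w. (Du l j i w - zeta j i w)\<^sup>2)" using dL by (simp add: L2_def)
          show "integrable M (\<lambda>w. \<Sum>i\<in>UNIV. (Du l j i w - zeta j i w)\<^sup>2)"
            using dL by (intro Bochner_Integration.integrable_sum) (simp add: L2_def)
          fix w
          show "(Du l j i w - zeta j i w)\<^sup>2 \<le> (\<Sum>i\<in>UNIV. (Du l j i w - zeta j i w)\<^sup>2)"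
            by (rule member_le_sum) auto
        qed
        have "0 \<le> (\<integral>w. (Du l j i w - zeta j i w)\<^sup>2 \<partial>M)" by (rule L2_int_nonneg)
        with le show ?case by simp
      qed
    qed
    have plim: "((\<lambda>l. \<integral>w. Du l j i w * G i k w \<partial>M) \<longlongrightarrow> (\<integral>w. zeta j i w * G i k w \<partial>M)) ?F" for i k
      by (rule prod_conv[OF _ zL GL ilim]) (use evp GL DuL in \<open>auto elim: eventually_mono\<close>)
    have llim: "((\<lambda>l. l * (\<integral>w. u l j w * psi w \<partial>M)) \<longlongrightarrow> 0) ?F"
    proof (rule tendsto_0_le[where K=1])
      let ?f = "\<lambda>l. sqrt l * sqrt (t1 l) * sqrt (\<integral>w. (psi w)\<^sup>2 \<partial>M)"
      have "(?f \<longlongrightarrow> sqrt 0 * sqrt 0 * sqrt (\<integral>w. (psi w)\<^sup>2 \<partial>M)) ?F"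
        by (intro tendsto_mult tendsto_real_sqrt tendsto_ident_at t1lim tendsto_const)
      then show "(?f \<longlongrightarrow> 0) ?F" by simp
      show "\<forall>\<^sub>F l in ?F. norm (l * (\<integral>w. u l j w * psi w \<partial>M)) \<le> norm (?f l) * 1"
        using evp
      proof eventually_elim
        case (elim l)
        have cs: "\<bar>\<integral>w. u l j w * psi w \<partial>M\<bar> \<le> sqrt (\<integral>w. (u l j w)\<^sup>2 \<partial>M) * sqrt (\<integral>w. (psi w)\<^sup>2 \<partial>M)"
          by (intro L2_CS uL elim psiL)
        have n2: "(L2norm M (u l j))\<^sup>2 = (\<integral>w. (u l j w)\<^sup>2 \<partial>M)"
          unfolding L2norm_def by (simp add: L2_int_nonneg)
        have "sqrt l * sqrt (t1 l) = l * sqrt (\<integral>w. (u l j w)\<^sup>2 \<partial>M)"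
          unfolding t1_def n2 using elim by (simp add: real_sqrt_mult mult.assoc[symmetric])
        then have fe: "?f l = l * (sqrt (\<integral>w. (u l j w)\<^sup>2 \<partial>M) * sqrt (\<integral>w. (psi w)\<^sup>2 \<partial>M))"
          by (metis mult.assoc)
        have "norm (l * (\<integral>w. u l j w * psi w \<partial>M)) = l * \<bar>\<integral>w. u l j w * psi w \<partial>M\<bar>"
          using elim by (simp add: abs_mult)
        also have "\<dots> \<le> l * (sqrt (\<integral>w. (u l j w)\<^sup>2 \<partial>M) * sqrt (\<integral>w. (psi w)\<^sup>2 \<partial>M))"
          using cs elim by (simp add: mult_left_mono)
        also have "\<dots> = ?f l" using fe by (rule sym)
        also have "\<dots> \<le> norm (?f l) * 1" by simp
        finally show ?case .
      qed
    qed
    define S where "S = (\<Sum>i\<in>UNIV. \<Sum>k\<in>UNIV. \<integral>w. zeta j i w * G i k w \<partial>M)"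
    have lim: "((\<lambda>l. l * (\<integral>w. u l j w * psi w \<partial>M) + 1/2 * (\<Sum>i\<in>UNIV. \<Sum>k\<in>UNIV. \<integral>w. Du l j i w * G i k w \<partial>M))
        \<longlongrightarrow> 0 + 1/2 * S) ?F"
      unfolding S_def by (intro tendsto_add tendsto_mult tendsto_const tendsto_sum llim plim)
    have const: "((\<lambda>l. l * (\<integral>w. u l j w * psi w \<partial>M) + 1/2 * (\<Sum>i\<in>UNIV. \<Sum>k\<in>UNIV. \<integral>w. Du l j i w * G i k w \<partial>M))
        \<longlongrightarrow> (\<integral>w. b j w * psi w \<partial>M)) ?F"
    proof (rule Lim_transform_eventually[OF tendsto_const])
      show "\<forall>\<^sub>F l in ?F. (\<integral>w. b j w * psi w \<partial>M) = l * (\<integral>w. u l j w * psi w \<partial>M) + 1/2 * (\<Sum>i\<in>UNIV. \<Sum>k\<in>UNIV. \<integral>w. Du l j i w * G i k w \<partial>M)"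
        using evp
      proof eventually_elim
        case (elim l)
        have eq: "l * (\<integral>w. u l j w * psi w \<partial>M)
             + 1/2 * (\<integral>w. (\<Sum>i\<in>UNIV. \<Sum>k\<in>UNIV. a w i k * Du l j i w * Dpsi k w) \<partial>M)
             = (\<integral>w. b j w * psi w \<partial>M)"
          using u_res elim psi_H Dpsi unfolding a_def by blast
        have iDG: "integrable M (\<lambda>w. Du l j i w * G i k w)" for i k
          by (intro L2_integrable_mult DuL elim GL)
        have "(\<integral>w. (\<Sum>i\<in>UNIV. \<Sum>k\<in>UNIV. a w i k * Du l j i w * Dpsi k w) \<partial>M)
            = (\<integral>w. (\<Sum>i\<in>UNIV. \<Sum>k\<in>UNIV. Du l j i w * G i k w) \<partial>M)"
          by (rule Bochner_Integration.integral_cong[OF refl]) (simp add: G_def mult_ac)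
        also have "\<dots> = (\<Sum>i\<in>UNIV. \<integral>w. (\<Sum>k\<in>UNIV. Du l j i w * G i k w) \<partial>M)"
          by (rule Bochner_Integration.integral_sum) (intro Bochner_Integration.integrable_sum iDG)
        also have "\<dots> = (\<Sum>i\<in>UNIV. \<Sum>k\<in>UNIV. \<integral>w. Du l j i w * G i k w \<partial>M)"
          by (rule sum.cong[OF refl]) (rule Bochner_Integration.integral_sum, rule iDG)
        finally show ?case using eq by simp
      qed
    qed
    have "0 + 1/2 * S = (\<integral>w. b j w * psi w \<partial>M)"
      by (rule tendsto_unique[OF _ lim const]) simp
    then show ?thesis unfolding S_def[symmetric] by simp
  qed
  have termeq: "(X $ i + (\<Sum>j\<in>UNIV. zeta j i w * X $ j)) * a w i k * Dpsi k w
      = X $ i * G i k w + (\<Sum>j\<in>UNIV. X $ j * (zeta j i w * G i k w))" for i k w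
  proof -
    have "(X $ i + (\<Sum>j\<in>UNIV. zeta j i w * X $ j)) * a w i k * Dpsi k w
       = X $ i * (a w i k * Dpsi k w) + (\<Sum>j\<in>UNIV. zeta j i w * X $ j) * (a w i k * Dpsi k w)"
      by (simp add: distrib_right mult.assoc)
    also have "(\<Sum>j\<in>UNIV. zeta j i w * X $ j) * (a w i k * Dpsi k w) = (\<Sum>j\<in>UNIV. X $ j * (zeta j i w * (a w i k * Dpsi k w)))"
      unfolding sum_distrib_right by (rule sum.cong[OF refl]) (simp only: mult_ac)
    finally show ?thesis by (simp only: G_def)
  qed
  have integrand: "(\<Sum>i\<in>UNIV. \<Sum>k\<in>UNIV.
            (X $ i + (\<Sum>j\<in>UNIV. zeta j i w * X $ j))
            * (sigma w ** transpose (sigma w)) $ i $ k * Dpsi k w)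
       = (\<Sum>i\<in>UNIV. \<Sum>k\<in>UNIV. X $ i * G i k w + (\<Sum>j\<in>UNIV. X $ j * (zeta j i w * G i k w)))" for w
    by (simp only: a_def[symmetric] termeq)
  have iG: "integrable M (G i k)" for i k
    using L2_integrable_mult[OF GL one] by simp
  have iZ: "integrable M (\<lambda>w. zeta j i w * G i k w)" for i j k
    by (intro L2_integrable_mult zL GL)
  have inner: "(\<integral>w. (\<Sum>k\<in>UNIV. X $ i * G i k w + (\<Sum>j\<in>UNIV. X $ j * (zeta j i w * G i k w))) \<partial>M)
     = (\<Sum>k\<in>UNIV. X $ i * (\<integral>w. G i k w \<partial>M) + (\<Sum>j\<in>UNIV. X $ j * (\<integral>w. zeta j i w * G i k w \<partial>M)))" for i
  proof -
    have "(\<integral>w. (\<Sum>k\<in>UNIV. X $ i * G i k w + (\<Sum>j\<in>UNIV. X $ j * (zeta j i w * G i k w))) \<partial>M)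
       = (\<Sum>k\<in>UNIV. \<integral>w. X $ i * G i k w + (\<Sum>j\<in>UNIV. X $ j * (zeta j i w * G i k w)) \<partial>M)"
      by (rule Bochner_Integration.integral_sum) (intro Bochner_Integration.integrable_add integrable_mult_right iG Bochner_Integration.integrable_sum iZ)
    also have "\<dots> = (\<Sum>k\<in>UNIV. X $ i * (\<integral>w. G i k w \<partial>M) + (\<Sum>j\<in>UNIV. X $ j * (\<integral>w. zeta j i w * G i k w \<partial>M)))"
    proof (rule sum.cong[OF refl])
      fix k
      have "(\<integral>w. X $ i * G i k w + (\<Sum>j\<in>UNIV. X $ j * (zeta j i w * G i k w)) \<partial>M)
          = (\<integral>w. X $ i * G i k w \<partial>M) + (\<integral>w. (\<Sum>j\<in>UNIV. X $ j * (zeta j i w * G i k w)) \<partial>M)"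
        by (rule Bochner_Integration.integral_add) (intro integrable_mult_right iG Bochner_Integration.integrable_sum iZ)+
      also have "(\<integral>w. (\<Sum>j\<in>UNIV. X $ j * (zeta j i w * G i k w)) \<partial>M) = (\<Sum>j\<in>UNIV. \<integral>w. X $ j * (zeta j i w * G i k w) \<partial>M)"
        by (rule Bochner_Integration.integral_sum) (intro integrable_mult_right iZ)
      finally show "(\<integral>w. X $ i * G i k w + (\<Sum>j\<in>UNIV. X $ j * (zeta j i w * G i k w)) \<partial>M)
          = X $ i * (\<integral>w. G i k w \<partial>M) + (\<Sum>j\<in>UNIV. X $ j * (\<integral>w. zeta j i w * G i k w \<partial>M))"
        by simp
    qed
    finally show ?thesis .
  qed
  have "(\<integral>w. (\<Sum>i\<in>UNIV. \<Sum>k\<in>UNIV.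
            (X $ i + (\<Sum>j\<in>UNIV. zeta j i w * X $ j))
            * (sigma w ** transpose (sigma w)) $ i $ k * Dpsi k w) \<partial>M)
     = (\<integral>w. (\<Sum>i\<in>UNIV. \<Sum>k\<in>UNIV. X $ i * G i k w + (\<Sum>j\<in>UNIV. X $ j * (zeta j i w * G i k w))) \<partial>M)"
    by (simp only: integrand)
  also have "\<dots> = (\<Sum>i\<in>UNIV. \<integral>w. (\<Sum>k\<in>UNIV. X $ i * G i k w + (\<Sum>j\<in>UNIV. X $ j * (zeta j i w * G i k w))) \<partial>M)"
    by (rule Bochner_Integration.integral_sum) (intro Bochner_Integration.integrable_sum Bochner_Integration.integrable_add integrable_mult_right iG iZ)
  also have "\<dots> = (\<Sum>i\<in>UNIV. \<Sum>k\<in>UNIV. X $ i * (\<integral>w. G i k w \<partial>M) + (\<Sum>j\<in>UNIV. X $ j * (\<integral>w. zeta j i w * G i k w \<partial>M)))"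
    by (simp only: inner)
  also have "\<dots> = (\<Sum>i\<in>UNIV. \<Sum>k\<in>UNIV. X $ i * (\<integral>w. G i k w \<partial>M)) + (\<Sum>i\<in>UNIV. \<Sum>k\<in>UNIV. \<Sum>j\<in>UNIV. X $ j * (\<integral>w. zeta j i w * G i k w \<partial>M))"
    by (simp only: sum.distrib)
  also have "\<dots> = (\<Sum>i\<in>UNIV. X $ i * (- 2 * (\<integral>w. b i w * psi w \<partial>M))) + (\<Sum>j\<in>UNIV. X $ j * (2 * (\<integral>w. b j w * psi w \<partial>M)))"
  proof -
    have p1: "(\<Sum>i\<in>UNIV. \<Sum>k\<in>UNIV. X $ i * (\<integral>w. G i k w \<partial>M)) = (\<Sum>i\<in>UNIV. X $ i * (- 2 * (\<integral>w. b i w * psi w \<partial>M)))"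
      by (simp only: sum_distrib_left[symmetric] claim1)
    have "(\<Sum>i\<in>UNIV. \<Sum>k\<in>UNIV. \<Sum>j\<in>UNIV. X $ j * (\<integral>w. zeta j i w * G i k w \<partial>M))
        = (\<Sum>j\<in>UNIV. \<Sum>i\<in>UNIV. \<Sum>k\<in>UNIV. X $ j * (\<integral>w. zeta j i w * G i k w \<partial>M))"
      by (rule swap3)
    also have "\<dots> = (\<Sum>j\<in>UNIV. X $ j * (2 * (\<integral>w. b j w * psi w \<partial>M)))"
      by (simp only: sum_distrib_left[symmetric] claim2)
    finally show ?thesis using p1 by simp
  qed
  also have "\<dots> = 0" by (simp add: sum.distrib[symmetric])
  finally show ?thesis .
qed

end
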